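(* Let $f:\mathbb{R}^d\to\mathbb{R}$ be convex and $L$-smooth with a minimizer $x^\star$, and let $x_0\in\mathbb{R}^d$ satisfy $f(x_0)-f(x^\star)\le\Delta_0$. Fix an integer $N\ge1$, let $v_0=\mathbf{0}$ and for $k=0,\dots,N-1$, $$v_{k+1}=v_k+\frac{12}{L(N-k+1)(N-k+2)(N-k+3)}\nabla f(x_k),\qquad x_{k+1}=x_k-\frac1L\nabla f(x_k)-\frac{(N-k)(N-k+1)(N-k+2)}{6}v_{k+1}.$$ Define $\delta_{k+1}=\frac{12}{(N-k+1)(N-k+2)(N-k+3)}$ for $k=0,\dots,N$. Then $$\sum_{k=0}^{N}\frac{\delta_{k+1}}{2}\|\nabla f(x_k)\|^2\le\frac{12L\Delta_0}{(N+2)(N+3)}.$$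
   Context: $L$-smooth means $\|\nabla f(x)-\nabla f(y)\|\le L\|x-y\|$ for all $x,y$; $\|\cdot\|$ is the Euclidean norm. The iteration is called the memory-saving OGM-G (M-OGM-G). *)

theory Defs
  imports "HOL-Analysis.Analysis"
begin

end

theory Submission imports Defs begin

lemma line_deriv:
  fixes f :: "'a::real_inner \<Rightarrow> real" and g :: "'a \<Rightarrow> 'a"
  assumes grad: "\<And>y. (f has_derivative (\<lambda>h. g y \<bullet> h)) (at y)"
  shows "((\<lambda>t. f (x + t *\<^sub>R d)) has_real_derivative (g (x + t *\<^sub>R d) \<bullet> d)) (at t)"
proof -
  have l: "((\<lambda>t. x + t *\<^sub>R d) has_derivative (\<lambda>s. s *\<^sub>R d)) (at t)"
    by (auto intro!: derivative_eq_intros)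
  have "((\<lambda>t. f (x + t *\<^sub>R d)) has_derivative (\<lambda>s. g (x + t *\<^sub>R d) \<bullet> (s *\<^sub>R d))) (at t)"
    using has_derivative_compose[OF l grad] by simp
  moreover have "(\<lambda>s. g (x + t *\<^sub>R d) \<bullet> (s *\<^sub>R d)) = (*) (g (x + t *\<^sub>R d) \<bullet> d)"
    by (auto simp: fun_eq_iff)
  ultimately show ?thesis by (simp add: has_field_derivative_def)
qed

lemma grad_ineq:
  fixes f :: "'a::real_inner \<Rightarrow> real" and g :: "'a \<Rightarrow> 'a"
  assumes grad: "\<And>y. (f has_derivative (\<lambda>h. g y \<bullet> h)) (at y)"
    and convex: "convex_on UNIV f"
  shows "f x + g x \<bullet> (y - x) \<le> f y"
proof -
  define d where "d = y - x"
  define h where "h = (\<lambda>t::real. f (x + t *\<^sub>R d))"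
  have hc: "convex_on UNIV h"
  proof (rule convex_onI)
    fix t a b :: real assume t: "0 < t" "t < 1"
    have "x + ((1 - t) *\<^sub>R a + t *\<^sub>R b) *\<^sub>R d = (1 - t) *\<^sub>R (x + a *\<^sub>R d) + t *\<^sub>R (x + b *\<^sub>R d)"
      by (simp add: algebra_simps)
    then show "h ((1 - t) *\<^sub>R a + t *\<^sub>R b) \<le> (1 - t) * h a + t * h b"
      unfolding h_def using convex_onD[OF convex, of t "x + a *\<^sub>R d" "x + b *\<^sub>R d"] t by simp
  qed simp
  have "(h has_field_derivative (g x \<bullet> d)) (at 0 within UNIV)"
    unfolding h_def using line_deriv[OF grad, of x d 0] by simp
  from convex_on_imp_above_tangent[OF hc _ _ _ this, of 1]
  have "h 1 - h 0 \<ge> g x \<bullet> d" by simp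
  then show ?thesis unfolding h_def d_def by simp
qed

lemma descent:
  fixes f :: "'a::real_inner \<Rightarrow> real" and g :: "'a \<Rightarrow> 'a"
  assumes grad: "\<And>y. (f has_derivative (\<lambda>h. g y \<bullet> h)) (at y)"
    and smooth: "\<And>y z. norm (g y - g z) \<le> L * norm (y - z)"
  shows "f y \<le> f x + g x \<bullet> (y - x) + L / 2 * (norm (y - x))\<^sup>2"
proof -
  define d where "d = y - x"
  define p where "p = (\<lambda>t::real. f (x + t *\<^sub>R d) - t * (g x \<bullet> d) - L / 2 * t\<^sup>2 * (norm d)\<^sup>2)"
  have "p 0 \<ge> p 1"
  proof (rule DERIV_nonpos_imp_nonincreasing[of 0 1 p])
    fix t :: real assume t: "0 \<le> t" "t \<le> 1"
    have D: "(p has_real_derivative (g (x + t *\<^sub>R d) \<bullet> d - g x \<bullet> d - L / 2 * (2 * t) * (norm d)\<^sup>2)) (at t)"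
      unfolding p_def using line_deriv[OF grad, of x d t]
      by (auto intro!: derivative_eq_intros)
    have "g (x + t *\<^sub>R d) \<bullet> d - g x \<bullet> d = (g (x + t *\<^sub>R d) - g x) \<bullet> d"
      by (simp add: inner_diff_left)
    also have "\<dots> \<le> norm (g (x + t *\<^sub>R d) - g x) * norm d"
      by (rule norm_cauchy_schwarz)
    also have "\<dots> \<le> L * norm (t *\<^sub>R d) * norm d"
      using smooth[of "x + t *\<^sub>R d" x] by (simp add: mult_right_mono)
    also have "\<dots> = L / 2 * (2 * t) * (norm d)\<^sup>2"
      using t by (simp add: power2_eq_square)
    finally have "g (x + t *\<^sub>R d) \<bullet> d - g x \<bullet> d - L / 2 * (2 * t) * (norm d)\<^sup>2 \<le> 0" by simp
    with D show "\<exists>y. (p has_real_derivative y) (at t) \<and> y \<le> 0" by blast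
  qed simp
  then show ?thesis unfolding p_def d_def by simp
qed

lemma cocoercive:
  fixes f :: "'a::real_inner \<Rightarrow> real" and g :: "'a \<Rightarrow> 'a"
  assumes grad: "\<And>y. (f has_derivative (\<lambda>h. g y \<bullet> h)) (at y)"
    and convex: "convex_on UNIV f"
    and smooth: "\<And>y z. norm (g y - g z) \<le> L * norm (y - z)"
    and L: "L > 0"
  shows "f b + g b \<bullet> (a - b) + (norm (g a - g b))\<^sup>2 / (2 * L) \<le> f a"
proof -
  define phi where "phi = (\<lambda>z. f z - g b \<bullet> z)"
  define w where "w = g a - g b"
  have gphi: "\<And>y. (phi has_derivative (\<lambda>h. (g y - g b) \<bullet> h)) (at y)"
  proof -
    fix y
    have "(phi has_derivative (\<lambda>h. g y \<bullet> h - g b \<bullet> h)) (at y)"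
      unfolding phi_def by (rule has_derivative_diff[OF grad]) (auto intro!: derivative_eq_intros)
    then show "(phi has_derivative (\<lambda>h. (g y - g b) \<bullet> h)) (at y)"
      by (simp add: inner_diff_left)
  qed
  have sphi: "\<And>y z. norm ((g y - g b) - (g z - g b)) \<le> L * norm (y - z)"
    using smooth by simp
  have "phi b \<le> phi (a - (1 / L) *\<^sub>R w)"
    using grad_ineq[OF grad convex, of b "a - (1 / L) *\<^sub>R w"]
    unfolding phi_def by (simp add: inner_diff_right)
  also have "\<dots> \<le> phi a + (g a - g b) \<bullet> ((a - (1 / L) *\<^sub>R w) - a) + L / 2 * (norm ((a - (1 / L) *\<^sub>R w) - a))\<^sup>2"
    by (rule descent[OF gphi sphi])
  also have "\<dots> = phi a - (norm w)\<^sup>2 / (2 * L)"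
  proof -
    have e: "(a - (1 / L) *\<^sub>R w) - a = - ((1 / L) *\<^sub>R w)" by simp
    have "(g a - g b) \<bullet> (- ((1 / L) *\<^sub>R w)) = - (norm w)\<^sup>2 / L"
      by (simp add: w_def power2_norm_eq_inner)
    moreover have "(norm (- ((1 / L) *\<^sub>R w)))\<^sup>2 = (norm w)\<^sup>2 / L\<^sup>2"
      using L by (simp add: power_divide power2_eq_square)
    ultimately show ?thesis unfolding e using L by (simp add: power2_eq_square field_simps)
  qed
  finally show ?thesis unfolding phi_def w_def by (simp add: inner_diff_right)
qed


lemma step_alg:
  fixes g g' v x v' x' :: "'a::real_inner" and n L F F' :: real
  assumes L: "L > 0" and n: "n \<ge> 1"
    and v': "v' = v + (12 / (L * (n + 1) * (n + 2) * (n + 3))) *\<^sub>R g"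
    and x': "x' = x - (1 / L) *\<^sub>R g - (n * (n + 1) * (n + 2) / 6) *\<^sub>R v'"
  shows "6 / ((n + 1) * (n + 2)) * (F - F' - g' \<bullet> (x - x') - (norm (g - g'))\<^sup>2 / (2 * L))
      - 12 / ((n + 1) * (n + 2) * (n + 3)) * F + 12 / ((n + 1) * (n + 2) * (n + 3)) * (g \<bullet> x)
      - L * (v' \<bullet> x') + L * (v \<bullet> x)
    = (- (6 / ((n + 1) * (n + 2))) * (F' + (norm g')\<^sup>2 / (2 * L)) - n * (g' \<bullet> v')
        - ((n - 1) * n * (n + 1) * (n + 2) / 24) * L * (norm v')\<^sup>2)
      - (- (6 / ((n + 2) * (n + 3))) * (F + (norm g)\<^sup>2 / (2 * L)) - (n + 1) * (g \<bullet> v)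
        - (n * (n + 1) * (n + 2) * (n + 3) / 24) * L * (norm v)\<^sup>2)"
proof -
  define c where "c = 12 / (L * (n + 1) * (n + 2) * (n + 3))"
  define t where "t = n * (n + 1) * (n + 2) / 6"
  have v'': "v' = v + c *\<^sub>R g" using v' c_def by simp
  have x0: "x' = x - (1 / L) *\<^sub>R g - t *\<^sub>R v'" using x' t_def by simp
  have x'': "x' = x - (1 / L) *\<^sub>R g - t *\<^sub>R v - (t * c) *\<^sub>R g"
    unfolding x0 v'' by (simp add: scaleR_add_right algebra_simps)
  have nx: "x - x' = (1 / L) *\<^sub>R g + t *\<^sub>R v + (t * c) *\<^sub>R g" using x'' by (simp add: algebra_simps)
  define gg where "gg = g \<bullet> g"
  define gh where "gh = g \<bullet> g'"
  define hh where "hh = g' \<bullet> g'"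
  define gv where "gv = g \<bullet> v"
  define hv where "hv = g' \<bullet> v"
  define vv where "vv = v \<bullet> v"
  define gx where "gx = g \<bullet> x"
  define vx where "vx = v \<bullet> x"
  have e1: "g' \<bullet> (x - x') = gh / L + t * hv + t * c * gh"
    unfolding nx gh_def hv_def by (simp add: inner_simps inner_commute)
  have e2: "(norm (g - g'))\<^sup>2 = gg - 2 * gh + hh"
    unfolding gg_def gh_def hh_def power2_norm_eq_inner by (simp add: inner_simps inner_commute)
  have e3: "v' \<bullet> x' = vx + c * gx - (1/L) * (gv + c * gg) - t * (vv + 2 * c * gv + c * c * gg)"
    unfolding x'' v'' vx_def gx_def gv_def gg_def vv_def by (simp add: inner_simps inner_commute algebra_simps)
  have e4: "g' \<bullet> v' = hv + c * gh" unfolding v'' hv_def gh_def by (simp add: inner_simps inner_commute)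
  have e5: "(norm v')\<^sup>2 = vv + 2 * c * gv + c * c * gg"
    unfolding v'' vv_def gv_def gg_def power2_norm_eq_inner by (simp add: inner_simps inner_commute algebra_simps)
  have e6: "(norm g')\<^sup>2 = hh" "(norm g)\<^sup>2 = gg" "(norm v)\<^sup>2 = vv"
    unfolding hh_def gg_def vv_def power2_norm_eq_inner by auto
  have e7: "v \<bullet> x = vx" "g \<bullet> x = gx" "g \<bullet> v = gv" by (auto simp: vx_def gx_def gv_def)
  obtain a b d where ab: "n + 1 = a" "n + 2 = b" "n + 3 = d" by blast
  have p: "a \<noteq> 0" "b \<noteq> 0" "d \<noteq> 0" "L \<noteq> 0" using L n ab by auto
  have q: "n = a - 1" "b = a + 1" "d = a + 2" using ab by auto
  show ?thesis
    unfolding e1 e2 e3 e4 e5 e6 e7 c_def t_def ab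
    using p apply (simp add: field_simps)
    unfolding q by algebra
qed

theorem theorem2:
  fixes f :: "'a::euclidean_space \<Rightarrow> real"
    and g :: "'a \<Rightarrow> 'a"
    and L \<Delta>0 :: real
    and xstar x0 :: 'a
    and N :: nat
    and x v :: "nat \<Rightarrow> 'a"
  assumes L_pos: "L > 0"
    and grad: "\<And>y. (f has_derivative (\<lambda>h. g y \<bullet> h)) (at y)"
    and convex: "convex_on UNIV f"
    and smooth: "\<And>y z. norm (g y - g z) \<le> L * norm (y - z)"
    and minimizer: "\<And>y. f xstar \<le> f y"
    and init_gap: "f x0 - f xstar \<le> \<Delta>0"
    and N_ge: "N \<ge> 1"
    and x_init: "x 0 = x0"
    and v_init: "v 0 = 0"
    and v_step: "\<And>k. k < N \<Longrightarrow> v (Suc k) = v k +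
        (12 / (L * real (N - k + 1) * real (N - k + 2) * real (N - k + 3))) *\<^sub>R g (x k)"
    and x_step: "\<And>k. k < N \<Longrightarrow> x (Suc k) = x k - (1 / L) *\<^sub>R g (x k)
        - (real ((N - k) * (N - k + 1) * (N - k + 2)) / 6) *\<^sub>R v (Suc k)"
  shows "(\<Sum>k = 0..N. (12 / (real (N - k + 1) * real (N - k + 2) * real (N - k + 3))) / 2
            * (norm (g (x k)))\<^sup>2) \<le> 12 * L * \<Delta>0 / (real (N + 2) * real (N + 3))"
proof -
  define del where "del k = 12 / (real (N - k + 1) * real (N - k + 2) * real (N - k + 3))" for k
  define lam where "lam k = 6 / (real (N - k + 1) * real (N - k + 2))" for k
  define rho where "rho = 6 / (real (N + 2) * real (N + 3))"
  define Q where "Q a b = f (x a) - f (x b) - g (x b) \<bullet> (x a - x b) - (norm (g (x a) - g (x b)))\<^sup>2 / (2 * L)" for a b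
  define R where "R m = (let n = real (N - m) in
      rho * (f (x 0) + (norm (g (x 0)))\<^sup>2 / (2 * L)) - 6 / ((n + 2) * (n + 3)) * (f (x m) + (norm (g (x m)))\<^sup>2 / (2 * L))
      - (n + 1) * (g (x m) \<bullet> v m) - (n * (n + 1) * (n + 2) * (n + 3) / 24) * L * (norm (v m))\<^sup>2)" for m
  have L0: "L \<noteq> 0" using L_pos by simp
  have Qnn: "0 \<le> Q a b" for a b
    using cocoercive[OF grad convex smooth L_pos, of "x b" "x a"] unfolding Q_def by simp
  have star: "f xstar + (norm (g y))\<^sup>2 / (2 * L) \<le> f y" for y
  proof -
    have "f xstar \<le> f (y - (1 / L) *\<^sub>R g y)" by (rule minimizer)
    also have "\<dots> \<le> f y + g y \<bullet> ((y - (1 / L) *\<^sub>R g y) - y) + L / 2 * (norm ((y - (1 / L) *\<^sub>R g y) - y))\<^sup>2"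
      by (rule descent[OF grad smooth])
    also have "\<dots> = f y - (norm (g y))\<^sup>2 / (2 * L)"
    proof -
      have e: "(y - (1 / L) *\<^sub>R g y) - y = - ((1 / L) *\<^sub>R g y)" by simp
      have "g y \<bullet> (- ((1 / L) *\<^sub>R g y)) = - (norm (g y))\<^sup>2 / L"
        by (simp add: power2_norm_eq_inner)
      moreover have "(norm (- ((1 / L) *\<^sub>R g y)))\<^sup>2 = (norm (g y))\<^sup>2 / L\<^sup>2"
        using L_pos by (simp add: power_divide power2_eq_square)
      ultimately show ?thesis unfolding e using L_pos by (simp add: power2_eq_square field_simps)
    qed
    finally show ?thesis by simp
  qed
  have rN: "real (N - Suc m) = real (N - m) - 1" if "m < N" for m
    using that by (simp add: of_nat_diff)
  have vsum: "(\<Sum>k<m. del k *\<^sub>R g (x k)) = L *\<^sub>R v m" if "m \<le> N" for m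
    using that
  proof (induction m)
    case 0 then show ?case by (simp add: v_init)
  next
    case (Suc m)
    then have m: "m < N" by simp
    have "L * (12 / (L * real (N - m + 1) * real (N - m + 2) * real (N - m + 3))) = del m"
      unfolding del_def using L0 by simp
    then show ?case using Suc m by (simp add: v_step[OF m] scaleR_add_right)
  qed
  have dsum: "(\<Sum>k<m. del k) = 6 / ((real (N - m) + 2) * (real (N - m) + 3)) - rho" if "m \<le> N" for m
    using that
  proof (induction m)
    case 0 then show ?case by (simp add: rho_def)
  next
    case (Suc m)
    then have m: "m < N" by simp
    define n where "n = real (N - m)"
    have n1: "n \<ge> 1" using m unfolding n_def by simp
    have "del m = 12 / ((n + 1) * (n + 2) * (n + 3))" unfolding del_def n_def by (simp add: algebra_simps)
    moreover have "6 / ((n + 2) * (n + 3)) + 12 / ((n + 1) * (n + 2) * (n + 3)) = 6 / ((n - 1 + 2) * (n - 1 + 3))"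
    proof -
      obtain a b d where ab: "n + 1 = a" "n + 2 = b" "n + 3 = d" by blast
      have p: "a \<noteq> 0" "b \<noteq> 0" "d \<noteq> 0" using ab n1 by auto
      have q: "n = a - 1" "b = a + 1" "d = a + 2" using ab by auto
      have e: "n - 1 + 2 = n + 1" "n - 1 + 3 = n + 2" by simp_all
      show ?thesis unfolding e ab using p apply (simp add: field_simps) unfolding q by (simp add: algebra_simps)
    qed
    ultimately show ?case using Suc m by (simp add: rN[OF m] n_def[symmetric])
  qed
  have inv: "(\<Sum>k<m. lam k * Q k (Suc k) - del k * f (x k) + del k * (g (x k) \<bullet> x k)) - L * (v m \<bullet> x m) = R m"
    if "m \<le> N" for m
    using that
  proof (induction m)
    case 0 then show ?case by (simp add: R_def v_init rho_def Let_def add.commute)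
  next
    case (Suc m)
    then have m: "m < N" by simp
    define n where "n = real (N - m)"
    have n1: "n \<ge> 1" using m unfolding n_def by simp
    have vs: "v (Suc m) = v m + (12 / (L * (n + 1) * (n + 2) * (n + 3))) *\<^sub>R g (x m)"
      using v_step[OF m] unfolding n_def by (simp add: add.commute)
    have xs: "x (Suc m) = x m - (1 / L) *\<^sub>R g (x m) - (n * (n + 1) * (n + 2) / 6) *\<^sub>R v (Suc m)"
    proof -
      have c: "real ((N - m) * (N - m + 1) * (N - m + 2)) = n * (n + 1) * (n + 2)" unfolding n_def by (simp only: of_nat_mult of_nat_add of_nat_1 of_nat_numeral)
      show ?thesis using x_step[OF m] unfolding c .
    qed
    note st = step_alg[OF L_pos n1 vs xs, of "f (x m)" "f (x (Suc m))" "g (x (Suc m))"]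
    have lm: "lam m = 6 / ((n + 1) * (n + 2))" unfolding lam_def n_def by (simp add: algebra_simps)
    have dm: "del m = 12 / ((n + 1) * (n + 2) * (n + 3))" unfolding del_def n_def by (simp add: algebra_simps)
    have Rm: "R m = rho * (f (x 0) + (norm (g (x 0)))\<^sup>2 / (2 * L)) - 6 / ((n + 2) * (n + 3)) * (f (x m) + (norm (g (x m)))\<^sup>2 / (2 * L))
      - (n + 1) * (g (x m) \<bullet> v m) - (n * (n + 1) * (n + 2) * (n + 3) / 24) * L * (norm (v m))\<^sup>2"
      unfolding R_def n_def Let_def by simp
    have RSm: "R (Suc m) = rho * (f (x 0) + (norm (g (x 0)))\<^sup>2 / (2 * L)) - 6 / ((n + 1) * (n + 2)) * (f (x (Suc m)) + (norm (g (x (Suc m))))\<^sup>2 / (2 * L))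
      - n * (g (x (Suc m)) \<bullet> v (Suc m)) - ((n - 1) * n * (n + 1) * (n + 2) / 24) * L * (norm (v (Suc m)))\<^sup>2"
    proof -
      have a: "n - 1 + 2 = n + 1" "n - 1 + 3 = n + 2" "n - 1 + 1 = n" by simp_all
      show ?thesis unfolding R_def Let_def rN[OF m] n_def[symmetric] a by (simp add: algebra_simps)
    qed
    have "(\<Sum>k<Suc m. lam k * Q k (Suc k) - del k * f (x k) + del k * (g (x k) \<bullet> x k)) - L * (v (Suc m) \<bullet> x (Suc m))
      = ((\<Sum>k<m. lam k * Q k (Suc k) - del k * f (x k) + del k * (g (x k) \<bullet> x k)) - L * (v m \<bullet> x m))
        + (lam m * Q m (Suc m) - del m * f (x m) + del m * (g (x m) \<bullet> x m) - L * (v (Suc m) \<bullet> x (Suc m)) + L * (v m \<bullet> x m))"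
      by simp
    also have "\<dots> = R m + (lam m * Q m (Suc m) - del m * f (x m) + del m * (g (x m) \<bullet> x m) - L * (v (Suc m) \<bullet> x (Suc m)) + L * (v m \<bullet> x m))"
      using Suc m by simp
    also have "\<dots> = R (Suc m)"
      unfolding Rm RSm lm dm Q_def using st by simp
    finally show ?case .
  qed
  define T where "T = (\<Sum>k<N. del k * (norm (g (x k)))\<^sup>2)"
  define S1 where "S1 = (\<Sum>k<N. lam k * Q k (Suc k))"
  define S2 where "S2 = (\<Sum>k<N. del k * Q N k)"
  define Fs where "Fs = (\<Sum>k<N. del k * f (x k))"
  define Gx where "Gx = (\<Sum>k<N. del k * (g (x k) \<bullet> x k))"
  have S1ge: "0 \<le> S1" unfolding S1_def lam_def using Qnn by (intro sum_nonneg mult_nonneg_nonneg) auto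
  have S2ge: "0 \<le> S2" unfolding S2_def del_def using Qnn by (intro sum_nonneg mult_nonneg_nonneg) auto
  have D: "(\<Sum>k<N. del k) = 1 - rho" using dsum[of N] by simp
  have RN: "R N = rho * (f (x 0) + (norm (g (x 0)))\<^sup>2 / (2 * L)) - (f (x N) + (norm (g (x N)))\<^sup>2 / (2 * L)) - g (x N) \<bullet> v N"
    by (simp add: R_def Let_def field_simps)
  have I: "S1 - Fs + Gx - L * (v N \<bullet> x N) = R N"
    using inv[of N] unfolding S1_def Fs_def Gx_def by (simp add: sum.distrib sum_subtractf)
  have s1: "(\<Sum>k<N. (del k *\<^sub>R g (x k)) \<bullet> x N) = L * (v N \<bullet> x N)"
  proof -
    have "(\<Sum>k<N. (del k *\<^sub>R g (x k)) \<bullet> x N) = (\<Sum>k<N. del k *\<^sub>R g (x k)) \<bullet> x N"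
      by (rule inner_sum_left[symmetric])
    also have "\<dots> = L * (v N \<bullet> x N)" using vsum[of N] by simp
    finally show ?thesis .
  qed
  have s2: "(\<Sum>k<N. g (x N) \<bullet> (del k *\<^sub>R g (x k))) = L * (g (x N) \<bullet> v N)"
  proof -
    have "(\<Sum>k<N. g (x N) \<bullet> (del k *\<^sub>R g (x k))) = g (x N) \<bullet> (\<Sum>k<N. del k *\<^sub>R g (x k))"
      by (rule inner_sum_right[symmetric])
    also have "\<dots> = L * (g (x N) \<bullet> v N)" using vsum[of N] by simp
    finally show ?thesis .
  qed
  have nd: "(norm (a - b))\<^sup>2 = (norm a)\<^sup>2 - 2 * (a \<bullet> b) + (norm b)\<^sup>2" for a b :: 'a
    by (simp add: power2_norm_eq_inner inner_diff_left inner_diff_right inner_commute)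
  have "S2 = (\<Sum>k<N. del k * f (x N) - del k * f (x k) - (del k *\<^sub>R g (x k)) \<bullet> x N + del k * (g (x k) \<bullet> x k)
      - del k * ((norm (g (x N)))\<^sup>2 / (2 * L)) + (g (x N) \<bullet> (del k *\<^sub>R g (x k))) / L - del k * (norm (g (x k)))\<^sup>2 / (2 * L))"
    unfolding S2_def
  proof (rule sum.cong)
    fix k
    show "del k * Q N k = del k * f (x N) - del k * f (x k) - (del k *\<^sub>R g (x k)) \<bullet> x N + del k * (g (x k) \<bullet> x k)
      - del k * ((norm (g (x N)))\<^sup>2 / (2 * L)) + (g (x N) \<bullet> (del k *\<^sub>R g (x k))) / L - del k * (norm (g (x k)))\<^sup>2 / (2 * L)"
      unfolding Q_def nd using L0 by (simp add: inner_diff_right field_simps)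
  qed simp
  also have "\<dots> = (\<Sum>k<N. del k) * f (x N) - Fs - L * (v N \<bullet> x N) + Gx
      - (\<Sum>k<N. del k) * ((norm (g (x N)))\<^sup>2 / (2 * L)) + L * (g (x N) \<bullet> v N) / L - T / (2 * L)"
    unfolding s1[symmetric] s2[symmetric] Fs_def Gx_def T_def
    by (simp add: sum.distrib sum_subtractf sum_distrib_right sum_divide_distrib)
  finally have S2e: "S2 = (1 - rho) * f (x N) - Fs - L * (v N \<bullet> x N) + Gx
      - (1 - rho) * ((norm (g (x N)))\<^sup>2 / (2 * L)) + g (x N) \<bullet> v N - T / (2 * L)"
    unfolding D using L0 by simp
  have st0: "f xstar + (norm (g (x 0)))\<^sup>2 / (2 * L) \<le> f (x 0)" by (rule star)
  have stN: "f xstar + (norm (g (x N)))\<^sup>2 / (2 * L) \<le> f (x N)" by (rule star)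
  have rho0: "0 \<le> rho" unfolding rho_def by simp
  have key: "T / (2 * L) + (norm (g (x N)))\<^sup>2 / (2 * L) * 2 \<le> 2 * rho * (f (x 0) - f xstar)"
  proof -
    define a0 where "a0 = (norm (g (x 0)))\<^sup>2 / (2 * L)"
    define aN where "aN = (norm (g (x N)))\<^sup>2 / (2 * L)"
    define TT where "TT = T / (2 * L)"
    have a: "0 \<le> rho * f (x 0) - rho * f xstar - rho * a0"
      using mult_left_mono[OF st0 rho0] unfolding a0_def by (simp add: algebra_simps)
    have b: "0 \<le> rho * f (x N) - rho * f xstar - rho * aN"
      using mult_left_mono[OF stN rho0] unfolding aN_def by (simp add: algebra_simps)
    have S2': "S2 = f (x N) - rho * f (x N) - Fs - L * (v N \<bullet> x N) + Gx - aN + rho * aN + g (x N) \<bullet> v N - TT"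
      using S2e unfolding aN_def TT_def using L0 by (simp add: algebra_simps diff_divide_distrib)
    have RN': "R N = rho * f (x 0) + rho * a0 - f (x N) - aN - g (x N) \<bullet> v N"
      using RN unfolding aN_def a0_def by (simp add: algebra_simps)
    have "TT + aN * 2 \<le> 2 * rho * f (x 0) - 2 * rho * f xstar"
      using a b S1ge S2ge I S2' RN' by linarith
    then show ?thesis unfolding TT_def aN_def by (simp add: algebra_simps)
  qed
  have key2: "T / 2 + (norm (g (x N)))\<^sup>2 \<le> 2 * rho * L * \<Delta>0"
  proof -
    have "T / 2 + (norm (g (x N)))\<^sup>2 = L * (T / (2 * L) + (norm (g (x N)))\<^sup>2 / (2 * L) * 2)"
      using L0 by (simp add: field_simps)
    also have "\<dots> \<le> L * (2 * rho * (f (x 0) - f xstar))"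
      using key L_pos by simp
    also have "\<dots> \<le> L * (2 * rho * \<Delta>0)"
      using init_gap x_init L_pos rho0 by (simp add: mult_left_mono)
    finally show ?thesis by (simp add: algebra_simps)
  qed
  have dN: "del N = 2" unfolding del_def by simp
  have "(\<Sum>k = 0..N. (12 / (real (N - k + 1) * real (N - k + 2) * real (N - k + 3))) / 2 * (norm (g (x k)))\<^sup>2)
      = (\<Sum>k<Suc N. del k / 2 * (norm (g (x k)))\<^sup>2)"
    unfolding del_def by (rule sum.cong) auto
  also have "\<dots> = T / 2 + (norm (g (x N)))\<^sup>2"
    unfolding T_def using dN by (simp add: sum_divide_distrib)
  also have "\<dots> \<le> 2 * rho * L * \<Delta>0" by (rule key2)
  also have "\<dots> = 12 * L * \<Delta>0 / (real (N + 2) * real (N + 3))"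
    unfolding rho_def by simp
  finally show ?thesis .
qed
end
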